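(* Let $r\in\mathbb N$, $1<q<\infty$ and $t=r^{1/q}$. Then $K^{\mathcal M}_{q,r}=\mathcal N_t^{(q)}$.
   Context: $c_{00}$ denotes finitely supported real sequences and $(e_n)$ the unit vectors. $K^{\mathcal M}_{q,r}$ is the smallest subset of $c_{00}$ that contains all vectors $\pm e_n$ and has the property: whenever $y_1,\dots,y_l\in K^{\mathcal M}_{q,r}$ with $l\le r$ and pairwise disjoint supports, then $r^{-1/q}(y_1+\dots+y_l)\in K^{\mathcal M}_{q,r}$. For $\alpha>0$ let $C_\alpha=\{\pm\alpha^j: j\in\mathbb Z\}\cup\{0\}$, $\mathcal N_\alpha=\{x\in c_{00}: x(i)\in C_\alpha \text{ for all } i\}$, and $\mathcal N_\alpha^{(q)}=\mathcal N_\alpha\cap B_{\ell_q}$, where $B_{\ell_q}$ is the closed unit ball of $\ell_q$. *)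

theory Defs
  imports Complex_Main
begin

definition supp :: "(nat \<Rightarrow> real) \<Rightarrow> nat set" where
  "supp x = {i. x i \<noteq> 0}"

definition c00 :: "(nat \<Rightarrow> real) set" where
  "c00 = {x. finite (supp x)}"

definition unitvec :: "nat \<Rightarrow> nat \<Rightarrow> real" where
  "unitvec n = (\<lambda>i. if i = n then 1 else 0)"

definition disjoint_supps :: "(nat \<Rightarrow> real) list \<Rightarrow> bool" where
  "disjoint_supps ys \<longleftrightarrow>
     (\<forall>i j. i < length ys \<longrightarrow> j < length ys \<longrightarrow> i \<noteq> j \<longrightarrow> supp (ys ! i) \<inter> supp (ys ! j) = {})"

inductive_set KM :: "real \<Rightarrow> nat \<Rightarrow> (nat \<Rightarrow> real) set" for q :: real and r :: nat where
  pos_unit: "unitvec n \<in> KM q r"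
| neg_unit: "(\<lambda>i. - unitvec n i) \<in> KM q r"
| comb: "\<lbrakk> ys \<in> lists (KM q r); length ys \<le> r; disjoint_supps ys \<rbrakk>
          \<Longrightarrow> (\<lambda>i. r powr (-1/q) * (\<Sum>y\<leftarrow>ys. y i)) \<in> KM q r"

definition Cset :: "real \<Rightarrow> real set" where
  "Cset \<alpha> = {y. \<exists>j::int. y = \<alpha> powi j \<or> y = - (\<alpha> powi j)} \<union> {0}"

definition Nset :: "real \<Rightarrow> (nat \<Rightarrow> real) set" where
  "Nset \<alpha> = {x \<in> c00. \<forall>i. x i \<in> Cset \<alpha>}"

definition lq_norm :: "real \<Rightarrow> (nat \<Rightarrow> real) \<Rightarrow> real" where
  "lq_norm q x = (\<Sum>i\<in>supp x. \<bar>x i\<bar> powr q) powr (1 / q)"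

definition Nset_q :: "real \<Rightarrow> real \<Rightarrow> (nat \<Rightarrow> real) set" where
  "Nset_q \<alpha> q = Nset \<alpha> \<inter> {x. lq_norm q x \<le> 1}"

end

theory Submission
  imports Defs
begin


lemma packing:
  fixes a :: "'a \<Rightarrow> nat" and C c :: nat
  assumes "finite S" "\<forall>i\<in>S. 0 < a i" "\<forall>i\<in>S. \<forall>j\<in>S. a i dvd a j \<or> a j dvd a i"
    "\<forall>i\<in>S. a i dvd C" "sum a S \<le> c * C"
  shows "\<exists>g. (\<forall>i\<in>S. g i < c) \<and> (\<forall>j<c. sum a {i\<in>S. g i = j} \<le> C)"
  using assms
proof (induction S rule: finite_ranking_induct[where f="\<lambda>i. - int (a i)"])
  case empty
  then show ?case by auto
next
  case (insert x S)
  show ?case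
  proof (cases "x \<in> S")
    case True
    then show ?thesis using insert by (simp add: insert_absorb)
  next
    case False
    have ax: "0 < a x" using insert by auto
    have dv: "a x dvd a y" if "y \<in> S" for y
    proof -
      have "a x \<le> a y" using insert(2)[OF that] by simp
      moreover have "a x dvd a y \<or> a y dvd a x" using insert(5) that by auto
      ultimately show ?thesis using ax
        by (metis dvd_imp_le le_antisym dvd_refl)
    qed
    have sS: "sum a S + a x \<le> c * C" using insert(7) False insert(1) by simp
    have "\<exists>g. (\<forall>i\<in>S. g i < c) \<and> (\<forall>j<c. sum a {i\<in>S. g i = j} \<le> C)"
    proof (rule insert(3))
      show "\<forall>i\<in>S. 0 < a i" using insert(4) by blast
      show "\<forall>i\<in>S. \<forall>j\<in>S. a i dvd a j \<or> a j dvd a i" using insert(5) by blast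
      show "\<forall>i\<in>S. a i dvd C" using insert(6) by blast
      show "sum a S \<le> c * C" using sS by linarith
    qed
    then obtain g where g1: "\<forall>i\<in>S. g i < c" and g2: "\<forall>j<c. sum a {i\<in>S. g i = j} \<le> C"
      by blast
    define L where "L j = sum a {i\<in>S. g i = j}" for j
    have Ldv: "a x dvd L j" for j unfolding L_def
      by (rule dvd_sum) (use dv in auto)
    have Cdv: "a x dvd C" using insert by auto
    have tot: "(\<Sum>j<c. L j) = sum a S"
      unfolding L_def using insert(1) g1
      by (subst sum.group[symmetric, where g = g]) (auto)
    have "\<exists>j<c. L j + a x \<le> C"
    proof (rule ccontr)
      assume neg: "\<not> (\<exists>j<c. L j + a x \<le> C)"
      have "\<forall>j<c. L j = C"
      proof (intro allI impI)
        fix j assume "j < c"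
        hence h: "C < L j + a x" using neg by auto
        have h2: "L j \<le> C" using g2 \<open>j<c\<close> L_def by auto
        obtain u where u: "L j = u * a x" using Ldv by (metis dvd_def mult.commute)
        obtain v where v: "C = v * a x" using Cdv by (metis dvd_def mult.commute)
        have "u \<le> v" using h2 u v ax by (metis mult_le_cancel2 not_le)
        moreover have "v < u + 1" using h u v ax
          by (metis add_mult_distrib mult_1 mult_less_cancel2)
        ultimately show "L j = C" using u v by (metis le_antisym less_Suc_eq_le Suc_eq_plus1)
      qed
      hence "(\<Sum>j<c. L j) = c * C" by simp
      thus False using tot sS ax by linarith
    qed
    then obtain j0 where j0: "j0 < c" "L j0 + a x \<le> C" by auto
    define g' where "g' = g(x := j0)"
    have "\<forall>i\<in>insert x S. g' i < c" using g1 j0 False unfolding g'_def by auto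
    moreover have "sum a {i\<in>insert x S. g' i = j} \<le> C" if "j < c" for j
    proof (cases "j = j0")
      case True
      have "{i\<in>insert x S. g' i = j} = insert x {i\<in>S. g i = j}"
        using True False unfolding g'_def by auto
      hence "sum a {i\<in>insert x S. g' i = j} = a x + L j"
        using False insert(1) L_def by simp
      then show ?thesis using j0 True by simp
    next
      case F: False
      have "{i\<in>insert x S. g' i = j} = {i\<in>S. g i = j}"
        using F False unfolding g'_def by auto
      then show ?thesis using g2 that by simp
    qed
    ultimately show ?thesis by blast
  qed
qed



lemma sum_at_most_one:
  fixes f :: "nat \<Rightarrow> real"
  assumes "finite J" "\<forall>j\<in>J. \<forall>j'\<in>J. j \<noteq> j' \<longrightarrow> f j = 0 \<or> f j' = 0"
  shows "(sum f J = 0 \<and> (\<forall>j\<in>J. f j = 0)) \<or> (\<exists>j\<in>J. sum f J = f j \<and> (\<forall>j'\<in>J. j' \<noteq> j \<longrightarrow> f j' = 0))"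
proof (cases "\<exists>j\<in>J. f j \<noteq> 0")
  case True
  then obtain j where j: "j \<in> J" "f j \<noteq> 0" by auto
  hence z: "\<forall>j'\<in>J. j' \<noteq> j \<longrightarrow> f j' = 0" using assms(2) by metis
  have "sum f J = f j + sum f (J - {j})" using j assms(1) by (simp add: sum.remove)
  also have "sum f (J - {j}) = 0" using z by (intro sum.neutral) auto
  finally show ?thesis using j z by auto
qed auto

lemma sum_at_most_one_fun:
  fixes f :: "nat \<Rightarrow> real" and h :: "real \<Rightarrow> real"
  assumes "finite J" "\<forall>j\<in>J. \<forall>j'\<in>J. j \<noteq> j' \<longrightarrow> f j = 0 \<or> f j' = 0" "h 0 = 0"
  shows "h (sum f J) = (\<Sum>j\<in>J. h (f j))"
proof -
  from sum_at_most_one[OF assms(1,2)] show ?thesis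
  proof
    assume "sum f J = 0 \<and> (\<forall>j\<in>J. f j = 0)"
    thus ?thesis using assms(3) by simp
  next
    assume "\<exists>j\<in>J. sum f J = f j \<and> (\<forall>j'\<in>J. j' \<noteq> j \<longrightarrow> f j' = 0)"
    then obtain j where j: "j \<in> J" "sum f J = f j" "\<forall>j'\<in>J. j' \<noteq> j \<longrightarrow> f j' = 0" by auto
    have "(\<Sum>j\<in>J. h (f j)) = h (f j) + (\<Sum>j\<in>J - {j}. h (f j))"
      using j assms(1) by (simp add: sum.remove)
    also have "(\<Sum>j\<in>J - {j}. h (f j)) = 0" using j(3) assms(3) by (intro sum.neutral) auto
    finally show ?thesis using j by simp
  qed
qed

lemma sum_list_nth_form: "(\<Sum>y\<leftarrow>ys. f y) = (\<Sum>j<length ys. f (ys ! j))"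
  by (simp add: sum_list_sum_nth atLeast0LessThan)

lemma Cset_iff: "v \<in> Cset t \<longleftrightarrow> v = 0 \<or> (\<exists>j::int. \<bar>v\<bar> = t powi j)" if "t > 0"
proof
  assume "v \<in> Cset t" thus "v = 0 \<or> (\<exists>j::int. \<bar>v\<bar> = t powi j)"
    unfolding Cset_def using that by (auto simp: abs_of_pos)
next
  assume "v = 0 \<or> (\<exists>j::int. \<bar>v\<bar> = t powi j)"
  thus "v \<in> Cset t" unfolding Cset_def by (auto simp: abs_if split: if_splits) (metis minus_minus)
qed

lemma KM_sub:
  fixes r :: nat and q :: real
  assumes r: "1 \<le> r" and q: "1 < q"
  shows "x \<in> KM q r \<Longrightarrow> finite (supp x) \<and> (\<forall>i. x i \<in> Cset (real r powr (1/q)))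
            \<and> (\<Sum>i\<in>supp x. \<bar>x i\<bar> powr q) \<le> 1"
proof (induction rule: KM.induct)
  case (pos_unit n)
  have s: "supp (unitvec n) = {n}" by (auto simp: supp_def unitvec_def)
  show ?case unfolding s using r
    by (auto simp: unitvec_def Cset_def intro: exI[where x=0])
next
  case (neg_unit n)
  have s: "supp (\<lambda>i. - unitvec n i) = {n}" by (auto simp: supp_def unitvec_def)
  show ?case unfolding s using r
    by (auto simp: unitvec_def Cset_def intro: exI[where x=0])
next
  case (comb ys)
  define n where "n = length ys"
  define t where "t = real r powr (1/q)"
  define u where "u = real r powr (-1/q)"
  have rpos: "0 < real r" using r by simp
  have tpos: "t > 0" unfolding t_def using rpos by simp
  have ut: "u = inverse t" unfolding u_def t_def using rpos by (simp add: powr_minus)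
  have upos: "u > 0" using ut tpos by simp
  have uq: "u powr q = inverse (real r)"
  proof -
    have "u powr q = real r powr ((-1/q)*q)" unfolding u_def by (rule powr_powr)
    also have "(-1/q)*q = -1" using q by simp
    finally show ?thesis using rpos by (simp add: powr_neg_one field_simps)
  qed
  define z where "z = (\<lambda>i. real r powr (-1/q) * (\<Sum>y\<leftarrow>ys. y i))"
  have zf: "z i = u * (\<Sum>j<n. (ys ! j) i)" for i
    unfolding z_def u_def n_def by (simp add: sum_list_nth_form)
  have disj: "\<forall>j\<in>{..<n}. \<forall>j'\<in>{..<n}. j \<noteq> j' \<longrightarrow> (ys ! j) i = 0 \<or> (ys ! j') i = 0" for i
    using comb.hyps(2) unfolding disjoint_supps_def supp_def n_def by blast
  have IHj: "finite (supp (ys!j)) \<and> (\<forall>i. (ys!j) i \<in> Cset t) \<and> (\<Sum>i\<in>supp (ys!j). \<bar>(ys!j) i\<bar> powr q) \<le> 1"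
    if "j < n" for j
  proof -
    have "ys ! j \<in> set ys" using that n_def by simp
    thus ?thesis using comb.IH unfolding t_def by (auto simp: in_lists_conv_set)
  qed
  define U where "U = (\<Union>j<n. supp (ys!j))"
  have fU: "finite U" unfolding U_def using IHj by auto
  have sU: "supp z \<subseteq> U"
  proof
    fix i assume "i \<in> supp z"
    hence "(\<Sum>j<n. (ys ! j) i) \<noteq> 0" unfolding supp_def using zf by auto
    then obtain j where "j < n" "(ys ! j) i \<noteq> 0" by (meson lessThan_iff sum.neutral)
    thus "i \<in> U" unfolding U_def supp_def by auto
  qed
  have fz: "finite (supp z)" using fU sU finite_subset by blast
  have Cz: "z i \<in> Cset t" for i
  proof -
    from sum_at_most_one[OF _ disj[of i]]
    have "(\<Sum>j<n. (ys ! j) i) = 0 \<or> (\<exists>j<n. (\<Sum>j<n. (ys ! j) i) = (ys ! j) i)" by auto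
    thus ?thesis
    proof
      assume "(\<Sum>j<n. (ys ! j) i) = 0"
      thus ?thesis using zf[of i] unfolding Cset_def by auto
    next
      assume "\<exists>j<n. (\<Sum>j<n. (ys ! j) i) = (ys ! j) i"
      then obtain j where j: "j < n" "(\<Sum>j<n. (ys ! j) i) = (ys ! j) i" by auto
      have "(ys ! j) i \<in> Cset t" using IHj[OF j(1)] by auto
      hence "(ys ! j) i = 0 \<or> (\<exists>k::int. \<bar>(ys ! j) i\<bar> = t powi k)" using Cset_iff tpos by blast
      thus ?thesis
      proof
        assume "(ys ! j) i = 0" thus ?thesis using zf[of i] j unfolding Cset_def by auto
      next
        assume "\<exists>k::int. \<bar>(ys ! j) i\<bar> = t powi k"
        then obtain k where k: "\<bar>(ys ! j) i\<bar> = t powi k" by auto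
        have "\<bar>z i\<bar> = u * t powi k" using zf[of i] j k upos by (simp add: abs_mult)
        also have "\<dots> = t powi (k - 1)" using ut tpos by (simp add: power_int_diff field_simps)
        finally show ?thesis using Cset_iff tpos by blast
      qed
    qed
  qed
  have "(\<Sum>i\<in>supp z. \<bar>z i\<bar> powr q) = (\<Sum>i\<in>U. \<bar>z i\<bar> powr q)"
    using fU sU by (intro sum.mono_neutral_left) (auto simp: supp_def)
  also have "\<dots> = (\<Sum>i\<in>U. inverse (real r) * (\<Sum>j<n. \<bar>(ys ! j) i\<bar> powr q))"
  proof (rule sum.cong[OF refl])
    fix i
    have "\<bar>z i\<bar> powr q = u powr q * \<bar>\<Sum>j<n. (ys ! j) i\<bar> powr q"
      using zf[of i] upos by (simp add: abs_mult powr_mult)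
    also have "\<bar>\<Sum>j<n. (ys ! j) i\<bar> powr q = (\<Sum>j<n. \<bar>(ys ! j) i\<bar> powr q)"
      using sum_at_most_one_fun[OF _ disj[of i], of "\<lambda>v. \<bar>v\<bar> powr q"] by simp
    finally show "\<bar>z i\<bar> powr q = inverse (real r) * (\<Sum>j<n. \<bar>(ys ! j) i\<bar> powr q)"
      using uq by simp
  qed
  also have "\<dots> = inverse (real r) * (\<Sum>j<n. \<Sum>i\<in>U. \<bar>(ys ! j) i\<bar> powr q)"
    by (simp add: sum_distrib_left sum.swap[of _ U])
  also have "\<dots> \<le> inverse (real r) * (\<Sum>j<n. 1)"
  proof (intro mult_left_mono sum_mono)
    fix j assume "j \<in> {..<n}"
    hence jn: "j < n" by simp
    have "supp (ys ! j) \<subseteq> U" unfolding U_def using jn by auto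
    hence "(\<Sum>i\<in>U. \<bar>(ys ! j) i\<bar> powr q) = (\<Sum>i\<in>supp (ys!j). \<bar>(ys ! j) i\<bar> powr q)"
      using fU by (intro sum.mono_neutral_right) (auto simp: supp_def)
    thus "(\<Sum>i\<in>U. \<bar>(ys ! j) i\<bar> powr q) \<le> 1" using IHj[OF jn] by simp
  qed simp
  also have "\<dots> \<le> 1" using comb.hyps(1) rpos unfolding n_def by (simp add: field_simps)
  finally have "(\<Sum>i\<in>supp z. \<bar>z i\<bar> powr q) \<le> 1" .
  thus ?case using fz Cz unfolding z_def t_def by blast
qed



lemma KM_zero: "(\<lambda>i. 0) \<in> KM q r"
  using KM.comb[of "[]" q r] by (simp add: disjoint_supps_def)

lemma KM_single:
  assumes "i \<in> supp x" "\<bar>x i\<bar> = 1" "finite (supp x)" "(\<Sum>k\<in>supp x. \<bar>x k\<bar> powr q) \<le> 1" "q > 0"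
  shows "x \<in> KM q r"
proof -
  have other: "x k = 0" if "k \<noteq> i" for k
  proof (rule ccontr)
    assume nz: "x k \<noteq> 0"
    hence ks: "k \<in> supp x" unfolding supp_def by simp
    have "(\<Sum>k\<in>{i,k}. \<bar>x k\<bar> powr q) \<le> (\<Sum>k\<in>supp x. \<bar>x k\<bar> powr q)"
      using assms(1,3) ks by (intro sum_mono2) auto
    moreover have "(\<Sum>k\<in>{i,k}. \<bar>x k\<bar> powr q) = 1 + \<bar>x k\<bar> powr q"
      using that assms(2) by simp
    moreover have "\<bar>x k\<bar> powr q > 0" using nz by simp
    ultimately show False using assms(4) by linarith
  qed
  have "x i = 1 \<or> x i = -1" using assms(2) by auto
  thus ?thesis
  proof
    assume "x i = 1"
    hence "x = unitvec i" using other by (auto simp: unitvec_def)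
    thus ?thesis by (simp add: KM.pos_unit)
  next
    assume "x i = -1"
    hence "x = (\<lambda>k. - unitvec i k)" using other by (auto simp: unitvec_def)
    thus ?thesis by (simp add: KM.neg_unit)
  qed
qed

lemma main_ind:
  fixes r :: nat and q :: real
  assumes r: "2 \<le> r" and q: "1 < q"
  defines "u \<equiv> real r powr (-1/q)"
  shows "\<forall>x. finite (supp x) \<and> (\<forall>i\<in>supp x. \<exists>k\<le>D. \<bar>x i\<bar> = u ^ k)
           \<and> (\<Sum>i\<in>supp x. \<bar>x i\<bar> powr q) \<le> 1 \<longrightarrow> x \<in> KM q r"
proof (induction D)
  case 0
  show ?case
  proof (intro allI impI)
    fix x assume H: "finite (supp x) \<and> (\<forall>i\<in>supp x. \<exists>k\<le>0::nat. \<bar>x i\<bar> = u ^ k)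
           \<and> (\<Sum>i\<in>supp x. \<bar>x i\<bar> powr q) \<le> 1"
    show "x \<in> KM q r"
    proof (cases "supp x = {}")
      case True
      hence "x = (\<lambda>i. 0)" unfolding supp_def by auto
      thus ?thesis using KM_zero by simp
    next
      case False
      then obtain i where "i \<in> supp x" by auto
      thus ?thesis using H q by (intro KM_single[of i]) auto
    qed
  qed
next
  case (Suc D)
  have rpos: "0 < real r" using r by simp
  have upos: "0 < u" unfolding u_def using rpos by simp
  have ult: "u < 1" unfolding u_def using r q by (simp add: powr_less_one)
  have uk: "(u ^ k) powr q = inverse (real r) ^ k" for k
  proof -
    have uq: "u powr q = inverse (real r)"
    proof -
      have "u powr q = real r powr ((-1/q)*q)" unfolding u_def by (rule powr_powr)
      also have "(-1/q)*q = -1" using q by simp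
      finally show ?thesis using rpos by (simp add: powr_neg_one field_simps)
    qed
    have "(u ^ k) powr q = (u powr real k) powr q" using upos by (simp add: powr_realpow)
    also have "\<dots> = (u powr q) powr real k" by (simp add: powr_powr mult.commute)
    also have "\<dots> = inverse (real r) ^ k" using uq rpos by (simp add: powr_realpow)
    finally show ?thesis .
  qed
  show ?case
  proof (intro allI impI)
    fix x assume H: "finite (supp x) \<and> (\<forall>i\<in>supp x. \<exists>k\<le>Suc D. \<bar>x i\<bar> = u ^ k)
           \<and> (\<Sum>i\<in>supp x. \<bar>x i\<bar> powr q) \<le> 1"
    define S where "S = supp x"
    have fS: "finite S" using H S_def by simp
    show "x \<in> KM q r"
    proof (cases "\<exists>i\<in>S. \<bar>x i\<bar> = 1")
      case True
      then obtain i where "i \<in> S" "\<bar>x i\<bar> = 1" by auto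
      thus ?thesis using H q S_def by (intro KM_single[of i]) auto
    next
      case False
      define k where "k i = (SOME k. k \<le> Suc D \<and> \<bar>x i\<bar> = u ^ k)" for i
      have k: "k i \<le> Suc D \<and> \<bar>x i\<bar> = u ^ k i" if "i \<in> S" for i
        unfolding k_def by (rule someI_ex) (use H that S_def in auto)
      have k1: "1 \<le> k i" if "i \<in> S" for i
      proof (rule ccontr)
        assume "\<not> 1 \<le> k i"
        hence "k i = 0" by simp
        thus False using k[OF that] False that by auto
      qed
      define a where "a i = r ^ (Suc D - k i)" for i
      have a_real: "real (a i) = real r ^ Suc D * inverse (real r) ^ k i" if "i \<in> S" for i
      proof -
        have "real (a i) = real r ^ (Suc D - k i)" unfolding a_def by simp
        also have "\<dots> = real r ^ Suc D / real r ^ k i"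
          using k[OF that] rpos by (simp add: power_diff)
        finally show ?thesis by (simp add: field_simps)
      qed
      have sumq: "(\<Sum>i\<in>S. inverse (real r) ^ k i) \<le> 1"
      proof -
        have "(\<Sum>i\<in>S. inverse (real r) ^ k i) = (\<Sum>i\<in>S. \<bar>x i\<bar> powr q)"
          using k uk by (intro sum.cong) auto
        thus ?thesis using H S_def by simp
      qed
      have "real (sum a S) \<le> real (r * r ^ D)"
      proof -
        have "real (sum a S) = real r ^ Suc D * (\<Sum>i\<in>S. inverse (real r) ^ k i)"
          using a_real by (simp add: sum_distrib_left)
        also have "\<dots> \<le> real r ^ Suc D" using sumq rpos
          by (simp add: mult_left_le)
        finally show ?thesis by simp
      qed
      hence sa: "sum a S \<le> r * r ^ D" by linarith
      have "\<exists>g. (\<forall>i\<in>S. g i < r) \<and> (\<forall>j<r. sum a {i\<in>S. g i = j} \<le> r ^ D)"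
      proof (rule packing[OF fS _ _ _ sa])
        show "\<forall>i\<in>S. 0 < a i" unfolding a_def using r by simp
        show "\<forall>i\<in>S. \<forall>j\<in>S. a i dvd a j \<or> a j dvd a i" unfolding a_def
          by (metis le_imp_power_dvd nat_le_linear)
        show "\<forall>i\<in>S. a i dvd r ^ D" unfolding a_def
        proof (intro ballI le_imp_power_dvd)
          fix i assume "i \<in> S" thus "Suc D - k i \<le> D" using k1[of i] by linarith
        qed
      qed
      then obtain g where g1: "\<forall>i\<in>S. g i < r" and g2: "\<forall>j<r. sum a {i\<in>S. g i = j} \<le> r ^ D"
        by blast
      define y where "y j = (\<lambda>i. if i \<in> S \<and> g i = j then x i / u else 0)" for j
      have supp_y: "supp (y j) = {i\<in>S. g i = j}" for j
        unfolding y_def supp_def S_def using upos by auto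
      have yKM: "y j \<in> KM q r" if "j < r" for j
      proof -
        have "finite (supp (y j))" using fS supp_y by simp
        moreover have "\<forall>i\<in>supp (y j). \<exists>m\<le>D. \<bar>y j i\<bar> = u ^ m"
        proof
          fix i assume "i \<in> supp (y j)"
          hence iS: "i \<in> S" "g i = j" using supp_y by auto
          have "\<bar>y j i\<bar> = u ^ k i / u" using iS k[OF iS(1)] upos unfolding y_def by simp
          also have "\<dots> = u ^ (k i - 1)" using k1[OF iS(1)] upos
            by (simp add: power_diff)
          finally show "\<exists>m\<le>D. \<bar>y j i\<bar> = u ^ m" using k[OF iS(1)] by (intro exI[of _ "k i - 1"]) auto
        qed
        moreover have "(\<Sum>i\<in>supp (y j). \<bar>y j i\<bar> powr q) \<le> 1"
        proof -
          have "(\<Sum>i\<in>supp (y j). \<bar>y j i\<bar> powr q) = (\<Sum>i\<in>{i\<in>S. g i = j}. real (a i) / real r ^ D)"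
          proof (rule sum.cong)
            fix i assume "i \<in> {i\<in>S. g i = j}"
            hence iS: "i \<in> S" "g i = j" by auto
            have "\<bar>y j i\<bar> = u ^ k i / u" using iS k[OF iS(1)] upos unfolding y_def by simp
            also have "\<dots> = u ^ (k i - 1)" using k1[OF iS(1)] upos
              by (simp add: power_diff)
            finally have "\<bar>y j i\<bar> powr q = inverse (real r) ^ (k i - 1)" using uk by simp
            also have "\<dots> = real (a i) / real r ^ D"
              using a_real[OF iS(1)] k1[OF iS(1)] rpos
              by (cases "k i") (simp_all add: field_simps)
            finally show "\<bar>y j i\<bar> powr q = real (a i) / real r ^ D" .
          qed (simp add: supp_y)
          also have "\<dots> = real (sum a {i\<in>S. g i = j}) / real r ^ D"
            by (simp add: sum_divide_distrib)
          also have "\<dots> \<le> 1"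
          proof -
            have "sum a {i\<in>S. g i = j} \<le> r ^ D" using g2 that by blast
            hence "real (sum a {i\<in>S. g i = j}) \<le> real r ^ D"
              by (metis of_nat_le_iff of_nat_power)
            moreover have "(0::real) < real r ^ D" using rpos by simp
            ultimately show ?thesis by (simp add: pos_divide_le_eq)
          qed
          finally show ?thesis .
        qed
        ultimately show ?thesis using Suc.IH by blast
      qed
      define ys where "ys = map y [0..<r]"
      have ysl: "ys \<in> lists (KM q r)" unfolding ys_def using yKM by auto
      have ysn: "length ys \<le> r" unfolding ys_def by simp
      have ysd: "disjoint_supps ys" unfolding disjoint_supps_def ys_def
        by (auto simp: supp_y)
      have "(\<lambda>i. real r powr (-1/q) * (\<Sum>y\<leftarrow>ys. y i)) \<in> KM q r"
        by (rule KM.comb[OF ysl ysn ysd])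
      moreover have "(\<lambda>i. real r powr (-1/q) * (\<Sum>y\<leftarrow>ys. y i)) = x"
      proof
        fix l
        have "(\<Sum>y\<leftarrow>ys. y l) = (\<Sum>j<r. y j l)"
          unfolding ys_def by (simp add: sum_list_nth_form)
        also have "\<dots> = (if l \<in> S then x l / u else 0)"
        proof (cases "l \<in> S")
          case True
          have "(\<Sum>j<r. y j l) = (\<Sum>j<r. if j = g l then x l / u else 0)"
            unfolding y_def using True by (intro sum.cong) auto
          also have "\<dots> = x l / u" using g1 True by simp
          finally show ?thesis using True by simp
        qed (simp add: y_def)
        finally show "real r powr (-1/q) * (\<Sum>y\<leftarrow>ys. y l) = x l"
          using upos unfolding u_def[symmetric] by (auto simp: S_def supp_def)
      qed
      ultimately show ?thesis by simp
    qed
  qed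
qed



theorem mainTheorem2:
  fixes r :: nat and q :: real
  assumes "1 \<le> r" and "1 < q"
  shows "KM q r = Nset_q (real r powr (1 / q)) q"
proof
  define t where "t = real r powr (1 / q)"
  have rpos: "0 < real r" using assms by simp
  have tpos: "0 < t" unfolding t_def using rpos by simp
  have sum_nonneg: "0 \<le> (\<Sum>i\<in>supp x. \<bar>x i\<bar> powr q)" for x :: "nat \<Rightarrow> real" by (intro sum_nonneg) simp
  have lq_iff: "lq_norm q x \<le> 1 \<longleftrightarrow> (\<Sum>i\<in>supp x. \<bar>x i\<bar> powr q) \<le> 1" for x
  proof
    assume h: "lq_norm q x \<le> 1"
    show "(\<Sum>i\<in>supp x. \<bar>x i\<bar> powr q) \<le> 1"
    proof (rule ccontr)
      assume "\<not> ?thesis"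
      hence "1 < (\<Sum>i\<in>supp x. \<bar>x i\<bar> powr q)" by simp
      hence "1 < lq_norm q x" unfolding lq_norm_def using assms by simp
      thus False using h by simp
    qed
  next
    assume "(\<Sum>i\<in>supp x. \<bar>x i\<bar> powr q) \<le> 1"
    thus "lq_norm q x \<le> 1" unfolding lq_norm_def using assms sum_nonneg[of x]
      by (intro powr_le1) auto
  qed
  show "KM q r \<subseteq> Nset_q (real r powr (1 / q)) q"
  proof
    fix x assume "x \<in> KM q r"
    from KM_sub[OF assms this] show "x \<in> Nset_q (real r powr (1 / q)) q"
      unfolding Nset_q_def Nset_def c00_def using lq_iff by auto
  qed
  show "Nset_q (real r powr (1 / q)) q \<subseteq> KM q r"
  proof
    fix x assume "x \<in> Nset_q (real r powr (1 / q)) q"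
    hence fx: "finite (supp x)" and Cx: "\<forall>i. x i \<in> Cset t"
      and sx: "(\<Sum>i\<in>supp x. \<bar>x i\<bar> powr q) \<le> 1"
      unfolding Nset_q_def Nset_def c00_def t_def using lq_iff by auto
    have xpow: "\<exists>j::int. \<bar>x i\<bar> = t powi j" if "i \<in> supp x" for i
      using Cx Cset_iff[OF tpos] that unfolding supp_def by blast
    have xle: "\<bar>x i\<bar> \<le> 1" if "i \<in> supp x" for i
    proof (rule ccontr)
      assume "\<not> ?thesis"
      hence "1 < \<bar>x i\<bar> powr q" using assms by simp
      moreover have "\<bar>x i\<bar> powr q \<le> (\<Sum>i\<in>supp x. \<bar>x i\<bar> powr q)"
        using fx that by (intro member_le_sum) auto
      ultimately show False using sx by simp
    qed
    show "x \<in> KM q r"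
    proof (cases "r = 1")
      case True
      hence t1: "t = 1" unfolding t_def by simp
      show ?thesis
      proof (cases "supp x = {}")
        case True
        hence "x = (\<lambda>i. 0)" unfolding supp_def by auto
        thus ?thesis using KM_zero by simp
      next
        case False
        then obtain i where i: "i \<in> supp x" by auto
        have "\<bar>x i\<bar> = 1" using xpow[OF i] t1 by auto
        thus ?thesis using i fx sx assms by (intro KM_single[of i]) auto
      qed
    next
      case False
      hence r2: "2 \<le> r" using assms by simp
      define u where "u = real r powr (-1/q)"
      have ut: "u = inverse t" unfolding u_def t_def using rpos by (simp add: powr_minus)
      have t1: "1 < t" unfolding t_def using r2 assms by simp
      have ex: "\<exists>k::nat. \<bar>x i\<bar> = u ^ k" if iS: "i \<in> supp x" for i
      proof -
        obtain j where j: "\<bar>x i\<bar> = t powi j" using xpow[OF iS] by auto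
        have "j \<le> 0"
        proof (rule ccontr)
          assume "\<not> j \<le> 0"
          hence "1 < t ^ nat j" using t1 by simp
          moreover have "t powi j = t ^ nat j" using \<open>\<not> j \<le> 0\<close> by (simp add: power_int_def)
          ultimately show False using xle[OF iS] j by simp
        qed
        hence "t powi j = u ^ nat (-j)" unfolding ut by (simp add: power_int_def)
        thus ?thesis using j by (intro exI[of _ "nat (-j)"]) simp
      qed
      define k where "k i = (SOME k::nat. \<bar>x i\<bar> = u ^ k)" for i
      have k: "\<bar>x i\<bar> = u ^ k i" if "i \<in> supp x" for i
        unfolding k_def by (rule someI_ex) (rule ex[OF that])
      define D where "D = (\<Sum>i\<in>supp x. k i)"
      have "\<forall>i\<in>supp x. \<exists>m\<le>D. \<bar>x i\<bar> = u ^ m"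
      proof
        fix i assume i: "i \<in> supp x"
        have "k i \<le> D" unfolding D_def using fx i by (intro member_le_sum) auto
        thus "\<exists>m\<le>D. \<bar>x i\<bar> = u ^ m" using k[OF i] by blast
      qed
      thus ?thesis using main_ind[OF r2 assms(2), of D] fx sx unfolding u_def by blast
    qed
  qed
qed

end
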